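(* Let $\alpha$ be a reduced operation sequence of size $n$ producing the permutation $\pi$. Then the set of elements produced by the peaks of $\alpha$ equals the set of right-to-left maxima of $\pi$, i.e. the set of entries $\pi_j$ such that $\pi_j>\pi_k$ for all $k>j$.
   Context: Operation sequences: $\sigma[a]$ ($a\ge1$) denotes pushing the top $a$ elements of the input stack, as a block with relative order unchanged, onto the top of a working stack; $\tau[b]$ ($b\ge1$) denotes moving the top $b$ elements of the working stack, as a block with relative order unchanged, onto the top of an output stack; $\sigma=\sigma[1]$, $\tau=\tau[1]$. A well-formed operation sequence is a word $\alpha=\alpha_1\cdots\alpha_m$ in these symbols such that in every prefix the total push size is at least the total pop size, with equality for the whole word; its size $n$ is the total push size. Acting on an input stack containing $1,2,\dots,n$ with $1$ on top, it produces the permutation $\pi=\pi_1\cdots\pi_n$ obtained by reading the final output stack from top to bottom. $\alpha$ is reduced if every consecutive pair $\alpha_i\alpha_{i+1}$ with $\alpha_i$ a push and $\alpha_{i+1}$ a pop equals $\sigma[1]\tau[1]$. Such a pair in a reduced sequence is a peak, and the element pushed by $\alpha_i$ (equivalently popped by $\alpha_{i+1}$) is the element produced by that peak. *)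

theory Defs
  imports Main
begin

datatype op = Push nat | Pop nat

fun push_size :: "op \<Rightarrow> nat" where
  "push_size (Push a) = a" | "push_size (Pop b) = 0"

fun pop_size :: "op \<Rightarrow> nat" where
  "pop_size (Push a) = 0" | "pop_size (Pop b) = b"

definition total_push :: "op list \<Rightarrow> nat" where
  "total_push xs = sum_list (map push_size xs)"

definition total_pop :: "op list \<Rightarrow> nat" where
  "total_pop xs = sum_list (map pop_size xs)"

definition well_formed :: "op list \<Rightarrow> bool" where
  "well_formed xs \<longleftrightarrow>
     (\<forall>x \<in> set xs. case x of Push a \<Rightarrow> a \<ge> 1 | Pop b \<Rightarrow> b \<ge> 1) \<and>
     (\<forall>i \<le> length xs. total_pop (take i xs) \<le> total_push (take i xs)) \<and>
     total_pop xs = total_push xs"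

definition op_size :: "op list \<Rightarrow> nat" where
  "op_size xs = total_push xs"

text \<open>States: (input stack, working stack, output stack), lists with head = top.\<close>
type_synonym state = "nat list \<times> nat list \<times> nat list"

fun step :: "state \<Rightarrow> op \<Rightarrow> state" where
  "step (inp, wrk, out) (Push a) = (drop a inp, take a inp @ wrk, out)"
| "step (inp, wrk, out) (Pop b) = (inp, drop b wrk, take b wrk @ out)"

definition exec :: "op list \<Rightarrow> state \<Rightarrow> state" where
  "exec xs s = foldl step s xs"

definition init_state :: "nat \<Rightarrow> state" where
  "init_state n = ([1..<n+1], [], [])"

text \<open>The permutation produced: final output stack read top to bottom.\<close>
definition produced :: "op list \<Rightarrow> nat list" where
  "produced xs = snd (snd (exec xs (init_state (op_size xs))))"

definition is_push :: "op \<Rightarrow> bool" where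
  "is_push x \<longleftrightarrow> (\<exists>a. x = Push a)"

definition is_pop :: "op \<Rightarrow> bool" where
  "is_pop x \<longleftrightarrow> (\<exists>b. x = Pop b)"

definition reduced :: "op list \<Rightarrow> bool" where
  "reduced xs \<longleftrightarrow> (\<forall>i. Suc i < length xs \<longrightarrow> is_push (xs ! i) \<longrightarrow> is_pop (xs ! Suc i)
       \<longrightarrow> xs ! i = Push 1 \<and> xs ! Suc i = Pop 1)"

text \<open>Element produced by the peak at position i: the element pushed by xs!i,
  i.e. the top of the input stack just before step i.\<close>
definition peak_elements :: "op list \<Rightarrow> nat set" where
  "peak_elements xs = {hd (fst (exec (take i xs) (init_state (op_size xs)))) | i.
       Suc i < length xs \<and> xs ! i = Push 1 \<and> xs ! Suc i = Pop 1}"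

definition rl_maxima :: "nat list \<Rightarrow> nat set" where
  "rl_maxima p = {p ! j | j. j < length p \<and> (\<forall>k. j < k \<and> k < length p \<longrightarrow> p ! k < p ! j)}"

end

theory Submission
  imports Defs
begin

lemma exec_snoc: "exec (xs@[x]) s = step (exec xs s) x"
  by (simp add: exec_def)

lemma total_push_snoc: "total_push (xs@[x]) = total_push xs + push_size x"
  by (simp add: total_push_def)

lemma dswap: "distinct (A@B@C) \<Longrightarrow> distinct (B@A@C)"
  by (auto simp: distinct_append)

lemma dswap2: "distinct (X@A@B@C) \<Longrightarrow> distinct (X@B@A@C)"
  by (auto simp: distinct_append)

lemma inv:
  "exec xs (init_state N) = (inp,wrk,out) \<Longrightarrow>
   (\<exists>c. inp=[c..<N+1] \<and> (\<forall>z\<in>set wrk \<union> set out. z<c)) \<and> length inp = N - total_push xs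
    \<and> distinct (inp@wrk@out)"
proof (induction xs arbitrary: inp wrk out rule: rev_induct)
  case Nil
  then show ?case by (auto simp: exec_def init_state_def total_push_def)
next
  case (snoc x xs)
  obtain i w ou where e: "exec xs (init_state N) = (i,w,ou)" by (cases "exec xs (init_state N)") auto
  from snoc.IH[OF e] obtain c where c: "i=[c..<N+1]" "\<forall>z\<in>set w \<union> set ou. z<c"
    and l: "length i = N - total_push xs" and d: "distinct (i@w@ou)" by blast
  show ?case
  proof (cases x)
    case (Push a)
    have st: "inp = drop a i" "wrk = take a i @ w" "out = ou"
      using snoc.prems e Push by (auto simp: exec_snoc)
    have "\<forall>z\<in>set (take a i). z < c + a"
    proof
      fix z assume "z \<in> set (take a i)"
      then obtain k where "k < length (take a i)" "take a i ! k = z" by (auto simp: in_set_conv_nth)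
      then show "z < c + a" using c(1) nth_upt[of c k "Suc N"] by (simp del: upt_Suc; linarith)
    qed
    moreover have dd: "distinct (drop a i @ take a i @ w @ ou)"
    proof -
      have "distinct (take a i @ drop a i @ w @ ou)" using d by (metis append_assoc append_take_drop_id)
      then show ?thesis by (rule dswap)
    qed
    moreover have bb: "\<forall>z\<in>set wrk \<union> set out. z<c+a" 
    proof
      fix z assume "z \<in> set wrk \<union> set out"
      then have "z \<in> set (take a i) \<or> z \<in> set w \<union> set ou" using st by auto
      then show "z < c + a"
      proof
        assume "z \<in> set (take a i)" then show ?thesis using calculation(1) by blast
      next
        assume "z \<in> set w \<union> set ou" then have "z < c" using c(2) by blast
        then show ?thesis by linarith
      qed
    qed
    have ii: "inp = [c+a..<N+1]" using st c(1) by (simp add: drop_upt del: upt_Suc)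
    have ll: "length inp = N - total_push (xs@[x])" using st l by (simp add: total_push_snoc Push)
    have "distinct (inp@wrk@out)" using dd st by simp
    then show ?thesis using ii ll bb by blast
  next
    case (Pop b)
    have st: "inp = i" "wrk = drop b w" "out = take b w @ ou"
      using snoc.prems e Pop by (auto simp: exec_snoc)
    have dd: "distinct (i @ drop b w @ take b w @ ou)"
    proof -
      have "distinct (i @ take b w @ drop b w @ ou)" using d by (metis append_assoc append_take_drop_id)
      then show ?thesis by (rule dswap2)
    qed
    have bb: "\<forall>z\<in>set wrk \<union> set out. z<c"
      using c(2) st by (auto dest: in_set_takeD in_set_dropD)
    have ii: "inp = [c..<N+1]" using st c(1) by (simp only:)
    have ll: "length inp = N - total_push (xs@[x])" using st l by (simp add: total_push_snoc Pop)
    have "distinct (inp@wrk@out)" using dd st by (simp only:)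
    then show ?thesis using ii ll bb by blast
  qed
qed


definition St :: "op list \<Rightarrow> nat \<Rightarrow> state" where
  "St al i = exec (take i al) (init_state (op_size al))"

lemma St_Suc: "i < length al \<Longrightarrow> St al (Suc i) = step (St al i) (al!i)"
  by (simp add: St_def take_Suc_conv_app_nth exec_snoc)

lemma St_0: "St al 0 = ([1..<op_size al+1], [], [])"
  by (simp add: St_def exec_def init_state_def)

lemma St_len: "produced al = snd (snd (St al (length al)))"
  by (simp add: St_def produced_def)

lemma St_inv:
  assumes "St al i = (inp,wrk,out)"
  shows "(\<exists>c. inp=[c..<op_size al+1] \<and> (\<forall>z\<in>set wrk \<union> set out. z<c)) \<and>
     length inp = op_size al - total_push (take i al) \<and> distinct (inp@wrk@out)"
  using inv[of "take i al" "op_size al" inp wrk out] assms by (simp add: St_def)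

lemma tp_take: "total_push (take i al) \<le> op_size al"
proof -
  have "op_size al = total_push (take i al) + total_push (drop i al)"
    unfolding op_size_def total_push_def
    by (metis append_take_drop_id map_append sum_list_append)
  then show ?thesis by simp
qed

lemma out_mono: "i \<le> j \<Longrightarrow> j \<le> length al \<Longrightarrow>
   \<exists>pre. snd (snd (St al j)) = pre @ snd (snd (St al i))"
proof (induction j)
  case 0
  then show ?case by simp
next
  case (Suc j)
  show ?case
  proof (cases "i = Suc j")
    case True
    then show ?thesis by simp
  next
    case False
    then have "i \<le> j" "j < length al" using Suc.prems by auto
    then obtain pre where pre: "snd (snd (St al j)) = pre @ snd (snd (St al i))"
      using Suc.IH by auto
    obtain a b c where abc: "St al j = (a,b,c)" by (cases "St al j") auto
    show ?thesis
    proof (cases "al!j")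
      case (Push p)
      then show ?thesis using St_Suc[OF \<open>j < length al\<close>] abc pre by auto
    next
      case (Pop p)
      then show ?thesis using St_Suc[OF \<open>j < length al\<close>] abc pre by auto
    qed
  qed
qed

lemma first_time: "x \<in> set (snd (snd (St al m))) \<Longrightarrow> m \<le> length al \<Longrightarrow>
  \<exists>t<m. x \<notin> set (snd (snd (St al t))) \<and> x \<in> set (snd (snd (St al (Suc t))))"
proof (induction m)
  case 0
  then show ?case by (simp add: St_0)
next
  case (Suc m)
  then show ?case
    by (metis Suc_leD less_Suc_eq)
qed

lemma pops_shrink: "j \<le> t \<Longrightarrow> t \<le> length al \<Longrightarrow> (\<forall>k. j \<le> k \<and> k < t \<longrightarrow> is_pop (al!k)) \<Longrightarrow>
  set (fst (snd (St al t))) \<subseteq> set (fst (snd (St al j)))"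
proof (induction t)
  case 0
  then show ?case by simp
next
  case (Suc t)
  show ?case
  proof (cases "j = Suc t")
    case True
    then show ?thesis by simp
  next
    case False
    then have jt: "j \<le> t" "t < length al" using Suc.prems by auto
    then have IH: "set (fst (snd (St al t))) \<subseteq> set (fst (snd (St al j)))"
      using Suc.IH Suc.prems by auto
    obtain b where b: "al!t = Pop b" using Suc.prems jt by (auto simp: is_pop_def)
    obtain p q r where pqr: "St al t = (p,q,r)" by (cases "St al t") auto
    have "St al (Suc t) = (p, drop b q, take b q @ r)" using St_Suc[OF jt(2)] b pqr by simp
    then show ?thesis using IH pqr by (auto dest: in_set_dropD)
  qed
qed

lemma find_push: "x \<in> set (fst (snd (St al t))) \<Longrightarrow> t \<le> length al \<Longrightarrow>
  \<exists>s<t. is_push (al!s) \<and> (\<forall>k. s < k \<and> k < t \<longrightarrow> is_pop (al!k))"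
proof (induction t)
  case 0
  then show ?case by (simp add: St_0)
next
  case (Suc t)
  then have tl: "t < length al" by simp
  show ?case
  proof (cases "al!t")
    case (Push a)
    then show ?thesis by (auto simp: is_push_def)
  next
    case (Pop b)
    obtain p q r where pqr: "St al t = (p,q,r)" by (cases "St al t") auto
    have "St al (Suc t) = (p, drop b q, take b q @ r)" using St_Suc[OF tl] Pop pqr by simp
    then have "x \<in> set (fst (snd (St al t)))" using Suc.prems pqr by (auto dest: in_set_dropD)
    then obtain s where "s<t" "is_push (al!s)" "\<forall>k. s < k \<and> k < t \<longrightarrow> is_pop (al!k)"
      using Suc.IH tl by auto
    then show ?thesis using Pop
      by (metis is_pop_def less_Suc_eq)
  qed
qed

lemma peak_step:
  assumes "Suc s < length al" "al!s = Push 1" "al!Suc s = Pop 1"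
    and "St al s = (inp, w, ou)"
  shows "inp \<noteq> [] \<and> St al (Suc s) = (tl inp, hd inp # w, ou) \<and>
         St al (Suc (Suc s)) = (tl inp, w, hd inp # ou) \<and>
         (\<exists>c. inp = [c..<op_size al+1] \<and> hd inp = c \<and> (\<forall>z\<in>set w \<union> set ou. z<c))"
proof -
  from St_inv[OF assms(4)] obtain c where c: "inp = [c..<op_size al+1]" "\<forall>z\<in>set w \<union> set ou. z<c"
    and l: "length inp = op_size al - total_push (take s al)" by blast
  have "total_push (take (Suc s) al) = total_push (take s al) + 1"
    using assms(1,2) by (simp add: take_Suc_conv_app_nth total_push_snoc)
  then have "total_push (take s al) < op_size al" using tp_take[of "Suc s" al] by simp
  then have ne: "inp \<noteq> []" using l by auto
  then have "c < op_size al + 1" using c(1) by (cases "c < op_size al + 1") (simp_all del: upt_Suc)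
  then have hc: "hd inp = c" using c(1) by (simp add: hd_upt del: upt_Suc)
  have s1: "St al (Suc s) = (tl inp, hd inp # w, ou)"
    using St_Suc[of s al] assms ne by (simp add: drop_Suc take_Suc)
  have s2: "St al (Suc (Suc s)) = (tl inp, w, hd inp # ou)"
    using St_Suc[of "Suc s" al] assms s1 by simp
  show ?thesis using ne s1 s2 c hc by blast
qed


lemma peak_sub:
  assumes "Suc i < length al" "al!i = Push 1" "al!Suc i = Pop 1"
  shows "hd (fst (St al i)) \<in> rl_maxima (produced al)"
proof -
  obtain inp w ou where e: "St al i = (inp, w, ou)" by (cases "St al i") auto
  from peak_step[OF assms e] obtain c where
    s2: "St al (Suc (Suc i)) = (tl inp, w, c # ou)" and hc: "hd inp = c"
    and lt: "\<forall>z\<in>set ou. z<c" by auto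
  obtain pre where pre: "produced al = pre @ c # ou"
    using out_mono[of "Suc (Suc i)" "length al" al] assms(1) s2 St_len[of al] by auto
  have "c \<in> rl_maxima (produced al)"
    unfolding rl_maxima_def
  proof (intro CollectI exI conjI allI impI)
    show "c = produced al ! length pre" using pre by simp
    show "length pre < length (produced al)" using pre by simp
    fix k assume k: "length pre < k \<and> k < length (produced al)"
    then have "produced al ! k = ou ! (k - length pre - 1)" using pre
      by (simp add: nth_append)
    moreover have "k - length pre - 1 < length ou" using k pre by auto
    ultimately have "produced al ! k \<in> set ou" by simp
    then show "produced al ! k < produced al ! length pre" using lt pre by simp
  qed
  then show ?thesis using e hc by simp
qed

theorem mainTheorem8:
  fixes \<alpha> :: "op list" and n :: nat and \<pi> :: "nat list"
  assumes "well_formed \<alpha>" and "reduced \<alpha>" and "op_size \<alpha> = n"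
    and "\<pi> = produced \<alpha>"
  shows "peak_elements \<alpha> = rl_maxima \<pi>"
proof
  show "peak_elements \<alpha> \<subseteq> rl_maxima \<pi>"
  proof
    fix x assume "x \<in> peak_elements \<alpha>"
    then obtain i where i: "x = hd (fst (St \<alpha> i))" "Suc i < length \<alpha>" "\<alpha>!i = Push 1" "\<alpha>!Suc i = Pop 1"
      unfolding peak_elements_def St_def by blast
    then show "x \<in> rl_maxima \<pi>" using peak_sub[of i \<alpha>] assms(4) by simp
  qed
next
  show "rl_maxima \<pi> \<subseteq> peak_elements \<alpha>"
  proof
    fix x assume "x \<in> rl_maxima \<pi>"
    then obtain j where j: "x = \<pi>!j" "j < length \<pi>" and rl: "\<forall>k. j < k \<and> k < length \<pi> \<longrightarrow> \<pi>!k < \<pi>!j"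
      unfolding rl_maxima_def by blast
    let ?m = "length \<alpha>"
    have pi: "\<pi> = snd (snd (St \<alpha> ?m))" using assms(4) St_len by simp
    have "x \<in> set \<pi>" using j by simp
    then obtain t where t: "t < ?m" "x \<notin> set (snd (snd (St \<alpha> t)))" "x \<in> set (snd (snd (St \<alpha> (Suc t))))"
      using first_time[of x \<alpha> ?m] pi by auto
    obtain p q r where pqr: "St \<alpha> t = (p,q,r)" by (cases "St \<alpha> t") auto
    obtain b where b: "\<alpha>!t = Pop b"
    proof (cases "\<alpha>!t")
      case (Push a)
      then have "St \<alpha> (Suc t) = (drop a p, take a p @ q, r)" using St_Suc[OF t(1)] pqr by simp
      then show ?thesis using t pqr by simp
    qed
    have sSt: "St \<alpha> (Suc t) = (p, drop b q, take b q @ r)" using St_Suc[OF t(1)] pqr b by simp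
    have xq: "x \<in> set (take b q)" using t sSt pqr by auto
    then have "x \<in> set (fst (snd (St \<alpha> t)))" using pqr by (auto dest: in_set_takeD)
    then obtain s where s: "s < t" "is_push (\<alpha>!s)" "\<forall>k. s < k \<and> k < t \<longrightarrow> is_pop (\<alpha>!k)"
      using find_push[of x \<alpha> t] t by auto
    have "is_pop (\<alpha>!Suc s)"
      using s b by (cases "Suc s = t") (auto simp: is_pop_def)
    then have pk: "\<alpha>!s = Push 1" "\<alpha>!Suc s = Pop 1" and sl: "Suc s < ?m"
      using assms(2) s t unfolding reduced_def by auto
    obtain inp w ou where e: "St \<alpha> s = (inp, w, ou)" by (cases "St \<alpha> s") auto
    from peak_step[OF sl pk e] obtain c where
      s1: "St \<alpha> (Suc s) = (tl inp, c # w, ou)" and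
      s2: "St \<alpha> (Suc (Suc s)) = (tl inp, w, c # ou)" and hc: "hd inp = c"
      and lt: "\<forall>z\<in>set w \<union> set ou. z<c" by auto
    have cpeak: "c \<in> peak_elements \<alpha>"
      unfolding peak_elements_def using e hc sl pk by (force simp: St_def)
    show "x \<in> peak_elements \<alpha>"
    proof (cases "Suc s = t")
      case True
      then have "b = 1" using pk b by simp
      then have "x = c" using xq True s1 pqr by simp
      then show ?thesis using cpeak by simp
    next
      case False
      then have st2: "Suc (Suc s) \<le> t" using s by simp
      have "set q \<subseteq> set w"
        using pops_shrink[OF st2, of \<alpha>] t s pqr s2 by auto
      then have xc: "x < c" using xq lt by (auto dest: in_set_takeD)
      obtain pre1 where "r = pre1 @ c # ou"
        using out_mono[OF st2, of \<alpha>] t pqr s2 by auto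
      then have cr: "c \<in> set r" by simp
      obtain pre where pre: "\<pi> = pre @ take b q @ r"
        using out_mono[of "Suc t" ?m \<alpha>] t pi sSt by auto
      have dist: "distinct \<pi>" using St_inv[of \<alpha> ?m] pi
        by (cases "St \<alpha> ?m") auto
      obtain j' where j': "j' < length (pre @ take b q)" "(pre @ take b q) ! j' = x"
        
      proof -
        have "x \<in> set (pre @ take b q)" using xq by simp
        then show ?thesis using that by (metis in_set_conv_nth)
      qed
      have "\<pi> = (pre @ take b q) @ r" using pre by simp
      then have "\<pi> ! j' = x" using j' by (metis nth_append_left)
      moreover have "j' < length \<pi>" using j' pre by simp
      ultimately have jj: "j' = j" using j dist nth_eq_iff_index_eq by metis
      obtain k' where k': "k' < length r" "r ! k' = c" using cr by (metis in_set_conv_nth)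
      let ?k = "length (pre @ take b q) + k'"
      have "\<pi> ! ?k = c" using \<open>\<pi> = (pre @ take b q) @ r\<close> k' by (metis nth_append_length_plus)
      moreover have "j < ?k" "?k < length \<pi>" using jj j' k' pre by auto
      ultimately have "c < x" using rl j by metis
      then show ?thesis using xc by simp
    qed
  qed
qed

end
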